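(* Let $\Upsilon$ be a finite alphabet with a partition $\{\Upsilon_0,\Upsilon_1\}$, where $|\Upsilon_0|=n_0$ and $|\Upsilon_1|=n_1$ are positive integers. Let $(\eta,\omega)=((\eta_\ell)_{\ell\ge1},(\omega_\ell)_{\ell\ge1})$ be a pair of nonnegative integer sequences, each with finite support. Then there exists an exhaustive prefix-free list over $\Upsilon$ whose (parity-preserving) length distribution is $(\eta,\omega)$ if and only if the following two conditions hold: (a) $\mathsf{K}^+=0$; (b) $\mathsf{K}^+_\ell\ge|\mathsf{K}^-_\ell|$ for every $\ell\ge1$.
   Context: A word over $\Upsilon$ is even (resp. odd) if it contains an even (resp. odd) number of symbols from $\Upsilon_1$; $(\Upsilon^\ell)_0$ and $(\Upsilon^\ell)_1$ denote the even and odd words of length $\ell$. A finite list $\mathcal{L}$ of nonempty words over $\Upsilon$ is prefix-free if no word in it is a prefix of another word in it, and exhaustive if every word over $\Upsilon$ either has a prefix in $\mathcal{L}$ or is a prefix of some word in $\mathcal{L}$. The (parity-preserving) length distribution of $\mathcal{L}$ is the pair $(\eta,\omega)$ with $\eta_\ell=|\mathcal{L}\cap(\Upsilon^\ell)_0|$ and $\omega_\ell=|\mathcal{L}\cap(\Upsilon^\ell)_1|$ for $\ell\ge1$. For integers $n$ and $\ell>0$ and an integer sequence $\mu=(\mu_i)_{i\ge1}$ with finite support, $\mathsf{K}_\ell(\mu,n)=n^\ell-\sum_{i=1}^{\ell}\mu_i n^{\ell-i}$. Define $\mathsf{K}^+_\ell=\mathsf{K}_\ell(\eta+\omega,n_0+n_1)$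 and $\mathsf{K}^-_\ell=\mathsf{K}_\ell(\eta-\omega,n_0-n_1)$ (with $0^0=1$). Let $\mathsf{r}$ be the largest index in the union of the supports of $\eta$ and $\omega$, and set $\mathsf{K}^\pm=\mathsf{K}^\pm_{\mathsf{r}}$. *)

theory Defs
  imports Main "HOL-Library.Sublist"
begin

definition even_word :: "'a set \<Rightarrow> 'a list \<Rightarrow> bool" where
  "even_word U1 w \<longleftrightarrow> even (length (filter (\<lambda>x. x \<in> U1) w))"

definition odd_word :: "'a set \<Rightarrow> 'a list \<Rightarrow> bool" where
  "odd_word U1 w \<longleftrightarrow> odd (length (filter (\<lambda>x. x \<in> U1) w))"

definition prefix_free_list :: "'a list list \<Rightarrow> bool" where
  "prefix_free_list L \<longleftrightarrow> (\<forall>w\<in>set L. w \<noteq> []) \<and>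
     (\<forall>i<length L. \<forall>j<length L. i \<noteq> j \<longrightarrow> \<not> prefix (L ! i) (L ! j))"

definition exhaustive_list :: "'a set \<Rightarrow> 'a list list \<Rightarrow> bool" where
  "exhaustive_list Ups L \<longleftrightarrow> (\<forall>w. set w \<subseteq> Ups \<longrightarrow>
     (\<exists>v\<in>set L. prefix v w) \<or> (\<exists>v\<in>set L. prefix w v))"

definition has_length_distribution ::
  "'a set \<Rightarrow> 'a list list \<Rightarrow> (nat \<Rightarrow> nat) \<Rightarrow> (nat \<Rightarrow> nat) \<Rightarrow> bool" where
  "has_length_distribution U1 L \<eta> \<omega> \<longleftrightarrow> (\<forall>l\<ge>1.
     \<eta> l = length (filter (\<lambda>w. length w = l \<and> even_word U1 w) L) \<and>
     \<omega> l = length (filter (\<lambda>w. length w = l \<and> odd_word U1 w) L))"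

definition Kfun :: "(nat \<Rightarrow> int) \<Rightarrow> int \<Rightarrow> nat \<Rightarrow> int" where
  "Kfun \<mu> n l = n ^ l - (\<Sum>i=1..l. \<mu> i * n ^ (l - i))"

definition Kplus :: "(nat \<Rightarrow> nat) \<Rightarrow> (nat \<Rightarrow> nat) \<Rightarrow> nat \<Rightarrow> nat \<Rightarrow> nat \<Rightarrow> int" where
  "Kplus \<eta> \<omega> n0 n1 l = Kfun (\<lambda>i. int (\<eta> i) + int (\<omega> i)) (int n0 + int n1) l"

definition Kminus :: "(nat \<Rightarrow> nat) \<Rightarrow> (nat \<Rightarrow> nat) \<Rightarrow> nat \<Rightarrow> nat \<Rightarrow> nat \<Rightarrow> int" where
  "Kminus \<eta> \<omega> n0 n1 l = Kfun (\<lambda>i. int (\<eta> i) - int (\<omega> i)) (int n0 - int n1) l"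

definition support :: "(nat \<Rightarrow> nat) \<Rightarrow> nat set" where
  "support \<mu> = {l. 1 \<le> l \<and> \<mu> l \<noteq> 0}"

definition rmax :: "(nat \<Rightarrow> nat) \<Rightarrow> (nat \<Rightarrow> nat) \<Rightarrow> nat" where
  "rmax \<eta> \<omega> = Max (support \<eta> \<union> support \<omega> \<union> {0})"

end

theory Submission
  imports Defs
begin

definition Wd :: "'a set \<Rightarrow> nat \<Rightarrow> 'a list set" where
  "Wd A k = {w. set w \<subseteq> A \<and> length w = k}"
definition pfree :: "'a list set \<Rightarrow> bool" where
  "pfree S \<longleftrightarrow> (\<forall>v\<in>S. \<forall>w\<in>S. prefix v w \<longrightarrow> v = w)"
definition Unc :: "'a set \<Rightarrow> 'a list set \<Rightarrow> nat \<Rightarrow> 'a list set" where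
  "Unc A S k = {w\<in>Wd A k. \<not>(\<exists>v\<in>S. prefix v w)}"
definition ce :: "'a set \<Rightarrow> 'a list set \<Rightarrow> nat \<Rightarrow> nat" where
  "ce U1 S i = card {v\<in>S. length v = i \<and> even_word U1 v}"
definition co :: "'a set \<Rightarrow> 'a list set \<Rightarrow> nat \<Rightarrow> nat" where
  "co U1 S i = card {v\<in>S. length v = i \<and> \<not> even_word U1 v}"
definition sg :: "'a set \<Rightarrow> 'a list \<Rightarrow> int" where
  "sg U1 w = (if even_word U1 w then 1 else -1)"
definition pl :: "('a \<Rightarrow> int) \<Rightarrow> 'a list \<Rightarrow> int" where
  "pl g w = prod_list (map g w)"

lemma finite_Wd: "finite A \<Longrightarrow> finite (Wd A k)"
  unfolding Wd_def by (rule finite_lists_length_eq)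

lemma pl_append[simp]: "pl g (v @ u) = pl g v * pl g u"
  by (simp add: pl_def)

lemma Wd_Suc: "Wd A (Suc k) = (\<lambda>(a,w). a # w) ` (A \<times> Wd A k)"
  unfolding Wd_def by (auto simp: length_Suc_conv)

lemma sum_Wd:
  assumes "finite A"
  shows "(\<Sum>w\<in>Wd A k. pl g w) = (\<Sum>a\<in>A. g a) ^ k"
proof (induction k)
  case 0
  have "Wd A 0 = {[]}" by (auto simp: Wd_def)
  then show ?case by (simp add: pl_def)
next
  case (Suc k)
  have inj: "inj_on (\<lambda>(a,w). a # w) (A \<times> Wd A k)" by (auto simp: inj_on_def)
  have "(\<Sum>w\<in>Wd A (Suc k). pl g w) = (\<Sum>p\<in>A \<times> Wd A k. g (fst p) * pl g (snd p))"
    unfolding Wd_Suc by (subst sum.reindex[OF inj]) (auto simp: pl_def intro!: sum.cong)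
  also have "\<dots> = (\<Sum>a\<in>A. \<Sum>w\<in>Wd A k. g a * pl g w)"
    by (simp only: sum.cartesian_product split_def)
  also have "\<dots> = (\<Sum>a\<in>A. g a) * (\<Sum>w\<in>Wd A k. pl g w)"
    by (rule sum_product[symmetric])
  finally show ?case using Suc by simp
qed

lemma ext_eq:
  assumes "set v \<subseteq> A" "length v \<le> k"
  shows "{w\<in>Wd A k. prefix v w} = (\<lambda>u. v @ u) ` Wd A (k - length v)"
  using assms by (auto simp: Wd_def prefix_def)

lemma sum_ext:
  assumes "finite A" "set v \<subseteq> A" "length v \<le> k"
  shows "(\<Sum>w\<in>{w\<in>Wd A k. prefix v w}. pl g w) = pl g v * (\<Sum>a\<in>A. g a) ^ (k - length v)"
proof -
  have inj: "inj_on (\<lambda>u. v @ u) (Wd A (k - length v))" by (auto simp: inj_on_def)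
  show ?thesis unfolding ext_eq[OF assms(2,3)]
    by (simp add: sum.reindex[OF inj] sum_distrib_left[symmetric] sum_Wd[OF assms(1)])
qed

lemma unc_sum:
  assumes A: "finite A" and S: "finite S" "\<forall>v\<in>S. set v \<subseteq> A" "pfree S"
  shows "(\<Sum>w\<in>Unc A S k. pl g w) = (\<Sum>a\<in>A. g a) ^ k
           - (\<Sum>v\<in>{v\<in>S. length v \<le> k}. pl g v * (\<Sum>a\<in>A. g a) ^ (k - length v))"
proof -
  let ?S' = "{v\<in>S. length v \<le> k}"
  let ?E = "\<lambda>v. {w\<in>Wd A k. prefix v w}"
  have cov: "{w\<in>Wd A k. \<exists>v\<in>S. prefix v w} = (\<Union>v\<in>?S'. ?E v)"
    by (auto dest: prefix_length_le simp: Wd_def)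
  have split: "Wd A k = Unc A S k \<union> (\<Union>v\<in>?S'. ?E v)"
    using cov unfolding Unc_def by blast
  have disj: "Unc A S k \<inter> (\<Union>v\<in>?S'. ?E v) = {}"
    unfolding Unc_def by blast
  have fin: "finite (Unc A S k)" "finite (\<Union>v\<in>?S'. ?E v)"
  proof -
    have "Unc A S k \<subseteq> Wd A k" "(\<Union>v\<in>?S'. ?E v) \<subseteq> Wd A k" using split by blast+
    then show "finite (Unc A S k)" "finite (\<Union>v\<in>?S'. ?E v)"
      using finite_Wd[OF A, of k] finite_subset by blast+
  qed
  have "(\<Sum>w\<in>Wd A k. pl g w) = (\<Sum>w\<in>Unc A S k. pl g w) + (\<Sum>w\<in>(\<Union>v\<in>?S'. ?E v). pl g w)"
    by (subst split, rule sum.union_disjoint[OF fin disj])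
  moreover have "(\<Sum>w\<in>(\<Union>v\<in>?S'. ?E v). pl g w) = (\<Sum>v\<in>?S'. \<Sum>w\<in>?E v. pl g w)"
  proof (rule sum.UNION_disjoint)
    show "finite ?S'" using S by simp
    show "\<forall>v\<in>?S'. finite (?E v)" using finite_Wd[OF A] by simp
    show "\<forall>v\<in>?S'. \<forall>v'\<in>?S'. v \<noteq> v' \<longrightarrow> ?E v \<inter> ?E v' = {}"
    proof (intro ballI impI)
      fix v v' assume "v \<in> ?S'" "v' \<in> ?S'" "v \<noteq> v'"
      show "?E v \<inter> ?E v' = {}"
      proof (rule ccontr)
        assume "?E v \<inter> ?E v' \<noteq> {}"
        then obtain x where x: "prefix v x" "prefix v' x" by blast
        have vS: "v \<in> S" "v' \<in> S" using \<open>v \<in> ?S'\<close> \<open>v' \<in> ?S'\<close> by auto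
        from prefix_same_cases[OF x] have "prefix v v' \<or> prefix v' v" .
        then have "v = v'" using S(3) vS unfolding pfree_def by metis
        then show False using \<open>v \<noteq> v'\<close> by simp
      qed
    qed
  qed
  moreover have "(\<Sum>v\<in>?S'. \<Sum>w\<in>?E v. pl g w) = (\<Sum>v\<in>?S'. pl g v * (\<Sum>a\<in>A. g a) ^ (k - length v))"
    using S(2) by (intro sum.cong refl sum_ext[OF A]) auto
  ultimately show ?thesis using sum_Wd[OF A, where k=k and g=g] by simp
qed

lemma regroup:
  assumes "finite S" "\<forall>v\<in>S. length v \<ge> 1"
  shows "(\<Sum>v\<in>{v\<in>S. length v \<le> k}. h v * (m::int) ^ (k - length v))
       = (\<Sum>i=1..k. (\<Sum>v\<in>{v\<in>S. length v = i}. h v) * m ^ (k - i))"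
proof -
  have "(\<Sum>i=1..k. (\<Sum>v\<in>{v\<in>S. length v = i}. h v) * m ^ (k - i))
      = (\<Sum>i\<in>{1..k}. \<Sum>v\<in>{v\<in>S. length v = i}. h v * m ^ (k - length v))"
    by (auto simp: sum_distrib_right intro!: sum.cong)
  also have "\<dots> = (\<Sum>v\<in>(\<Union>i\<in>{1..k}. {v\<in>S. length v = i}). h v * m ^ (k - length v))"
    by (rule sum.UNION_disjoint[symmetric]) (use assms in auto)
  also have "(\<Union>i\<in>{1..k}. {v\<in>S. length v = i}) = {v\<in>S. length v \<le> k}"
    using assms(2) by auto
  finally show ?thesis by simp
qed

lemma Kfun_Suc: "Kfun \<mu> n (Suc l) = n * Kfun \<mu> n l - \<mu> (Suc l)"
proof -
  have "(\<Sum>i=1..Suc l. \<mu> i * n ^ (Suc l - i)) = (\<Sum>i=1..l. \<mu> i * n ^ (Suc l - i)) + \<mu> (Suc l)"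
    by simp
  also have "(\<Sum>i=1..l. \<mu> i * n ^ (Suc l - i)) = n * (\<Sum>i=1..l. \<mu> i * n ^ (l - i))"
    by (auto simp: sum_distrib_left Suc_diff_le intro!: sum.cong)
  finally show ?thesis unfolding Kfun_def by (simp add: algebra_simps)
qed

lemma Kfun_cong: "(\<And>i. 1 \<le> i \<Longrightarrow> i \<le> l \<Longrightarrow> \<mu> i = \<nu> i) \<Longrightarrow> Kfun \<mu> n l = Kfun \<nu> n l"
  unfolding Kfun_def by (auto intro!: sum.cong)

lemma even_word_Cons: "even_word U1 (a # w) = (if a \<in> U1 then \<not> even_word U1 w else even_word U1 w)"
  by (simp add: even_word_def)

lemma pl_sg: "pl (\<lambda>a. if a \<in> U1 then -1 else 1) w = sg U1 w"
  by (induction w) (auto simp: pl_def sg_def even_word_Cons even_word_def[of _ "[]"])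

lemma odd_word_iff: "odd_word U1 w \<longleftrightarrow> \<not> even_word U1 w"
  by (simp add: odd_word_def even_word_def)

lemma K_ident:
  assumes A: "finite A" "U0 \<union> U1 = A" "U0 \<inter> U1 = {}"
    and S: "finite S" "\<forall>v\<in>S. set v \<subseteq> A \<and> length v \<ge> 1" "pfree S"
  shows "int (card (Unc A S k)) = Kfun (\<lambda>i. int (ce U1 S i) + int (co U1 S i)) (int (card U0) + int (card U1)) k"
    and "(\<Sum>w\<in>Unc A S k. sg U1 w) = Kfun (\<lambda>i. int (ce U1 S i) - int (co U1 S i)) (int (card U0) - int (card U1)) k"
proof -
  have fU: "finite U0" "finite U1" using A by auto
  have SA: "\<forall>v\<in>S. set v \<subseteq> A" using S by auto
  have Sl: "\<forall>v\<in>S. length v \<ge> 1" using S by auto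
  have splitS: "{v\<in>S. length v = i} = {v\<in>S. length v = i \<and> even_word U1 v} \<union> {v\<in>S. length v = i \<and> \<not> even_word U1 v}"
    and disjS: "{v\<in>S. length v = i \<and> even_word U1 v} \<inter> {v\<in>S. length v = i \<and> \<not> even_word U1 v} = {}"
    and finS: "finite {v\<in>S. length v = i \<and> even_word U1 v}" "finite {v\<in>S. length v = i \<and> \<not> even_word U1 v}"
    for i using S by auto
  have pl1: "pl (\<lambda>_. 1) w = 1" for w by (induction w) (simp_all add: pl_def)
  have "int (card (Unc A S k)) = (\<Sum>w\<in>Unc A S k. pl (\<lambda>_. 1) w)"
    by (simp add: pl1)
  also have "\<dots> = (\<Sum>a\<in>A. (1::int)) ^ k
           - (\<Sum>v\<in>{v\<in>S. length v \<le> k}. pl (\<lambda>_. 1) v * (\<Sum>a\<in>A. (1::int)) ^ (k - length v))"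
    by (rule unc_sum[OF A(1) S(1) SA S(3)])
  also have "\<dots> = (\<Sum>a\<in>A. (1::int)) ^ k
           - (\<Sum>i=1..k. (\<Sum>v\<in>{v\<in>S. length v = i}. pl (\<lambda>_. 1) v) * (\<Sum>a\<in>A. (1::int)) ^ (k - i))"
    by (subst regroup[OF S(1) Sl]) simp
  also have "(\<Sum>a\<in>A. (1::int)) = int (card U0) + int (card U1)"
  proof -
    have "card A = card U0 + card U1" using A fU card_Un_disjoint by metis
    then show ?thesis by simp
  qed
  also have "(\<lambda>i. (\<Sum>v\<in>{v\<in>S. length v = i}. pl (\<lambda>_. 1) v)) = (\<lambda>i. int (ce U1 S i) + int (co U1 S i))"
  proof
    fix i
    show "(\<Sum>v\<in>{v\<in>S. length v = i}. pl (\<lambda>_. 1) v) = int (ce U1 S i) + int (co U1 S i)"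
      unfolding ce_def co_def
      by (subst splitS, subst sum.union_disjoint[OF finS disjS]) (simp add: pl1)
  qed
  finally show "int (card (Unc A S k)) = Kfun (\<lambda>i. int (ce U1 S i) + int (co U1 S i)) (int (card U0) + int (card U1)) k"
    unfolding Kfun_def .
  let ?g = "\<lambda>a. if a \<in> U1 then -1 else (1::int)"
  have "(\<Sum>w\<in>Unc A S k. sg U1 w) = (\<Sum>w\<in>Unc A S k. pl ?g w)"
    by (simp add: pl_sg)
  also have "\<dots> = (\<Sum>a\<in>A. ?g a) ^ k
           - (\<Sum>v\<in>{v\<in>S. length v \<le> k}. pl ?g v * (\<Sum>a\<in>A. ?g a) ^ (k - length v))"
    by (rule unc_sum[OF A(1) S(1) SA S(3)])
  also have "\<dots> = (\<Sum>a\<in>A. ?g a) ^ k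
           - (\<Sum>i=1..k. (\<Sum>v\<in>{v\<in>S. length v = i}. pl ?g v) * (\<Sum>a\<in>A. ?g a) ^ (k - i))"
    by (subst regroup[OF S(1) Sl]) simp
  also have "(\<Sum>a\<in>A. ?g a) = int (card U0) - int (card U1)"
  proof -
    have "(\<Sum>a\<in>A. ?g a) = (\<Sum>a\<in>U0. ?g a) + (\<Sum>a\<in>U1. ?g a)"
      using A fU by (metis sum.union_disjoint)
    also have "(\<Sum>a\<in>U0. ?g a) = (\<Sum>a\<in>U0. 1)" using A(3) by (intro sum.cong) auto
    finally show ?thesis by simp
  qed
  also have "(\<lambda>i. (\<Sum>v\<in>{v\<in>S. length v = i}. pl ?g v)) = (\<lambda>i. int (ce U1 S i) - int (co U1 S i))"
  proof
    fix i
    show "(\<Sum>v\<in>{v\<in>S. length v = i}. pl ?g v) = int (ce U1 S i) - int (co U1 S i)"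
      unfolding ce_def co_def pl_sg
      by (subst splitS, subst sum.union_disjoint[OF finS disjS]) (simp add: sg_def)
  qed
  finally show "(\<Sum>w\<in>Unc A S k. sg U1 w) = Kfun (\<lambda>i. int (ce U1 S i) - int (co U1 S i)) (int (card U0) - int (card U1)) k"
    unfolding Kfun_def .
qed

lemma pfl_iff: "prefix_free_list L \<longleftrightarrow> (\<forall>w\<in>set L. w \<noteq> []) \<and> distinct L \<and> pfree (set L)"
proof
  assume H: "prefix_free_list L"
  have d: "distinct L" unfolding distinct_conv_nth
  proof (intro allI impI)
    fix i j assume "i < length L" "j < length L" "i \<noteq> j"
    then show "L ! i \<noteq> L ! j" using H unfolding prefix_free_list_def
      by (metis prefix_def append_Nil2)
  qed
  moreover have "pfree (set L)"
    unfolding pfree_def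
  proof (intro ballI impI)
    fix v w assume "v \<in> set L" "w \<in> set L" "prefix v w"
    then obtain i j where "i < length L" "j < length L" "v = L ! i" "w = L ! j"
      by (auto simp: in_set_conv_nth)
    then show "v = w" using H \<open>prefix v w\<close> unfolding prefix_free_list_def by metis
  qed
  ultimately show "(\<forall>w\<in>set L. w \<noteq> []) \<and> distinct L \<and> pfree (set L)"
    using H by (simp add: prefix_free_list_def)
next
  assume H: "(\<forall>w\<in>set L. w \<noteq> []) \<and> distinct L \<and> pfree (set L)"
  show "prefix_free_list L" unfolding prefix_free_list_def
  proof (intro conjI allI impI)
    show "\<forall>w\<in>set L. w \<noteq> []" using H by simp
    fix i j assume "i < length L" "j < length L" "i \<noteq> j"
    then have "L ! i \<noteq> L ! j" using H nth_eq_iff_index_eq by blast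
    then show "\<not> prefix (L ! i) (L ! j)" using H \<open>i < length L\<close> \<open>j < length L\<close>
      unfolding pfree_def by auto
  qed
qed

lemma card_filter_distinct:
  assumes "distinct L" shows "length (filter P L) = card {v\<in>set L. P v}"
proof -
  have "{v\<in>set L. P v} = {x. P x} \<inter> set L" by blast
  then show ?thesis using distinct_length_filter[OF assms, of P] by simp
qed

theorem theorem4:
  fixes Ups U0 U1 :: "'a set" and \<eta> \<omega> :: "nat \<Rightarrow> nat"
  assumes "finite Ups" and "U0 \<union> U1 = Ups" and "U0 \<inter> U1 = {}"
    and "card U0 > 0" and "card U1 > 0"
    and "finite (support \<eta>)" and "finite (support \<omega>)"
  shows "(\<exists>L. (\<forall>w\<in>set L. set w \<subseteq> Ups) \<and> prefix_free_list L \<and> exhaustive_list Ups L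
              \<and> has_length_distribution U1 L \<eta> \<omega>)
     \<longleftrightarrow> (Kplus \<eta> \<omega> (card U0) (card U1) (rmax \<eta> \<omega>) = 0 \<and>
          (\<forall>l\<ge>1. Kplus \<eta> \<omega> (card U0) (card U1) l \<ge> \<bar>Kminus \<eta> \<omega> (card U0) (card U1) l\<bar>))"
proof -
  note A = assms(1,2,3)
  define r where "r = rmax \<eta> \<omega>"
  have fin: "finite (support \<eta> \<union> support \<omega> \<union> {0})" using assms(6,7) by simp
  have le_r: "l \<le> r" if "1 \<le> l" "\<eta> l \<noteq> 0 \<or> \<omega> l \<noteq> 0" for l
    unfolding r_def rmax_def using that by (intro Max_ge[OF fin]) (auto simp: support_def)
  have zero_r: "\<eta> l = 0 \<and> \<omega> l = 0" if "1 \<le> l" "r < l" for l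
    using le_r[OF that(1)] that(2) by force
  have Kp: "\<And>l. Kplus \<eta> \<omega> (card U0) (card U1) l = Kfun (\<lambda>i. int (\<eta> i) + int (\<omega> i)) (int (card U0) + int (card U1)) l"
    by (simp add: Kplus_def)
  have Km: "\<And>l. Kminus \<eta> \<omega> (card U0) (card U1) l = Kfun (\<lambda>i. int (\<eta> i) - int (\<omega> i)) (int (card U0) - int (card U1)) l"
    by (simp add: Kminus_def)
  have abs_le: "\<bar>\<Sum>w\<in>X. sg U1 w\<bar> \<le> int (card X)" for X
  proof -
    have "\<bar>\<Sum>w\<in>X. sg U1 w\<bar> \<le> (\<Sum>w\<in>X. \<bar>sg U1 w\<bar>)" by (rule sum_abs)
    also have "\<dots> = (\<Sum>w\<in>X. 1)" by (rule sum.cong) (auto simp: sg_def)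
    also have "\<dots> = int (card X)" by simp
    finally show ?thesis .
  qed
  show ?thesis
  proof
    assume "\<exists>L. (\<forall>w\<in>set L. set w \<subseteq> Ups) \<and> prefix_free_list L \<and> exhaustive_list Ups L
              \<and> has_length_distribution U1 L \<eta> \<omega>"
    then obtain L where L: "\<forall>w\<in>set L. set w \<subseteq> Ups" "prefix_free_list L" "exhaustive_list Ups L"
      "has_length_distribution U1 L \<eta> \<omega>" by blast
    define S where "S = set L"
    have ne: "\<forall>w\<in>S. w \<noteq> []" and d: "distinct L" and pf: "pfree S"
      using L(2) unfolding pfl_iff S_def by auto
    have Sprop: "finite S" "\<forall>v\<in>S. set v \<subseteq> Ups \<and> length v \<ge> 1"
      using L(1) ne by (auto simp: S_def Suc_le_eq)
    have cnt: "ce U1 S l = \<eta> l \<and> co U1 S l = \<omega> l" if "1 \<le> l" for l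
      using L(4) that d unfolding has_length_distribution_def ce_def co_def S_def
      by (simp add: card_filter_distinct odd_word_iff)
    have Kp': "Kplus \<eta> \<omega> (card U0) (card U1) l = int (card (Unc Ups S l))" for l
      unfolding Kp K_ident(1)[OF A Sprop pf] by (rule Kfun_cong) (simp add: cnt)
    have Km': "Kminus \<eta> \<omega> (card U0) (card U1) l = (\<Sum>w\<in>Unc Ups S l. sg U1 w)" for l
      unfolding Km K_ident(2)[OF A Sprop pf] by (rule Kfun_cong) (simp add: cnt)
    have lenS: "length v \<le> r" if "v \<in> S" for v
    proof -
      have l1: "1 \<le> length v" using Sprop that by auto
      have "v \<in> {u\<in>S. length u = length v \<and> even_word U1 u} \<or> v \<in> {u\<in>S. length u = length v \<and> \<not> even_word U1 u}"
        using that by auto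
      then have "ce U1 S (length v) \<noteq> 0 \<or> co U1 S (length v) \<noteq> 0"
        unfolding ce_def co_def using Sprop(1) by (auto simp: card_eq_0_iff)
      then show ?thesis using le_r[OF l1] cnt[OF l1] by auto
    qed
    have "Unc Ups S r = {}"
    proof (rule ccontr)
      assume "Unc Ups S r \<noteq> {}"
      then obtain w where w: "set w \<subseteq> Ups" "length w = r" "\<not>(\<exists>v\<in>S. prefix v w)"
        unfolding Unc_def Wd_def by auto
      then obtain v where v: "v \<in> S" "prefix w v"
        using L(3) unfolding exhaustive_list_def S_def by blast
      then have "length v = length w" using lenS[OF v(1)] w(2) prefix_length_le by fastforce
      then have "v = w" using v(2) by (metis append_Nil2 length_0_conv prefix_def add_diff_cancel_left' length_append)
      then show False using w(3) v by auto
    qed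
    then have "Kplus \<eta> \<omega> (card U0) (card U1) r = 0" using Kp' by simp
    moreover have "\<forall>l\<ge>1. Kplus \<eta> \<omega> (card U0) (card U1) l \<ge> \<bar>Kminus \<eta> \<omega> (card U0) (card U1) l\<bar>"
      using Kp' Km' abs_le by simp
    ultimately show "Kplus \<eta> \<omega> (card U0) (card U1) (rmax \<eta> \<omega>) = 0 \<and>
          (\<forall>l\<ge>1. Kplus \<eta> \<omega> (card U0) (card U1) l \<ge> \<bar>Kminus \<eta> \<omega> (card U0) (card U1) l\<bar>)"
      by (simp add: r_def)
  next
    assume H: "Kplus \<eta> \<omega> (card U0) (card U1) (rmax \<eta> \<omega>) = 0 \<and>
          (\<forall>l\<ge>1. Kplus \<eta> \<omega> (card U0) (card U1) l \<ge> \<bar>Kminus \<eta> \<omega> (card U0) (card U1) l\<bar>)"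
    have claim: "\<exists>S. finite S \<and> (\<forall>v\<in>S. set v \<subseteq> Ups \<and> length v \<ge> 1 \<and> length v \<le> k) \<and> pfree S
       \<and> (\<forall>i. 1 \<le> i \<longrightarrow> i \<le> k \<longrightarrow> ce U1 S i = \<eta> i \<and> co U1 S i = \<omega> i)" for k
    proof (induction k)
      case 0
      show ?case by (rule exI[of _ "{}"]) (simp add: pfree_def)
    next
      case (Suc k)
      then obtain S where S: "finite S" "\<forall>v\<in>S. set v \<subseteq> Ups \<and> length v \<ge> 1 \<and> length v \<le> k" "pfree S"
        "\<forall>i. 1 \<le> i \<longrightarrow> i \<le> k \<longrightarrow> ce U1 S i = \<eta> i \<and> co U1 S i = \<omega> i" by blast
      have Sprop: "\<forall>v\<in>S. set v \<subseteq> Ups \<and> length v \<ge> 1" using S(2) by auto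
      define U where "U = Unc Ups S (Suc k)"
      have emp: "{v\<in>S. length v = Suc k \<and> P v} = {}" for P
        using S(2) by fastforce
      have ceS0: "ce U1 S (Suc k) = 0" "co U1 S (Suc k) = 0"
        unfolding ce_def co_def emp by simp_all
      have "int (card U) = (int (card U0) + int (card U1)) * Kfun (\<lambda>i. int (ce U1 S i) + int (co U1 S i)) (int (card U0) + int (card U1)) k"
        unfolding U_def K_ident(1)[OF A S(1) Sprop S(3)] Kfun_Suc using ceS0 by simp
      also have "Kfun (\<lambda>i. int (ce U1 S i) + int (co U1 S i)) (int (card U0) + int (card U1)) k
          = Kplus \<eta> \<omega> (card U0) (card U1) k"
        unfolding Kp by (rule Kfun_cong) (simp add: S(4))
      finally have cU: "int (card U) = Kplus \<eta> \<omega> (card U0) (card U1) (Suc k) + int (\<eta> (Suc k)) + int (\<omega> (Suc k))"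
        unfolding Kp Kfun_Suc by simp
      have "(\<Sum>w\<in>U. sg U1 w) = (int (card U0) - int (card U1)) * Kfun (\<lambda>i. int (ce U1 S i) - int (co U1 S i)) (int (card U0) - int (card U1)) k"
        unfolding U_def K_ident(2)[OF A S(1) Sprop S(3)] Kfun_Suc using ceS0 by simp
      also have "Kfun (\<lambda>i. int (ce U1 S i) - int (co U1 S i)) (int (card U0) - int (card U1)) k
          = Kminus \<eta> \<omega> (card U0) (card U1) k"
        unfolding Km by (rule Kfun_cong) (simp add: S(4))
      finally have sU: "(\<Sum>w\<in>U. sg U1 w) = Kminus \<eta> \<omega> (card U0) (card U1) (Suc k) + int (\<eta> (Suc k)) - int (\<omega> (Suc k))"
        unfolding Km Kfun_Suc by simp
      define E where "E = {w\<in>U. even_word U1 w}"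
      define Od where "Od = {w\<in>U. \<not> even_word U1 w}"
      have finU: "finite U" unfolding U_def Unc_def using finite_Wd[OF A(1)] by simp
      have UEO: "U = E \<union> Od" "E \<inter> Od = {}" "finite E" "finite Od"
        using finU unfolding E_def Od_def by auto
      have c1: "int (card U) = int (card E) + int (card Od)"
        using UEO card_Un_disjoint by (metis of_nat_add)
      have c2: "(\<Sum>w\<in>U. sg U1 w) = int (card E) - int (card Od)"
      proof -
        have "(\<Sum>w\<in>U. sg U1 w) = (\<Sum>w\<in>E. sg U1 w) + (\<Sum>w\<in>Od. sg U1 w)"
          using UEO sum.union_disjoint by metis
        also have "(\<Sum>w\<in>E. sg U1 w) = (\<Sum>w\<in>E. 1)" by (rule sum.cong) (auto simp: E_def sg_def)
        also have "(\<Sum>w\<in>Od. sg U1 w) = (\<Sum>w\<in>Od. -1)" by (rule sum.cong) (auto simp: Od_def sg_def)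
        finally show ?thesis by simp
      qed
      have HK: "Kplus \<eta> \<omega> (card U0) (card U1) (Suc k) \<ge> \<bar>Kminus \<eta> \<omega> (card U0) (card U1) (Suc k)\<bar>"
        using H by simp
      have "\<eta> (Suc k) \<le> card E" using HK cU sU c1 c2 by linarith
      then obtain E' where E': "E' \<subseteq> E" "card E' = \<eta> (Suc k)" "finite E'"
        by (rule obtain_subset_with_card_n)
      have "\<omega> (Suc k) \<le> card Od" using HK cU sU c1 c2 by linarith
      then obtain Od' where Od': "Od' \<subseteq> Od" "card Od' = \<omega> (Suc k)" "finite Od'"
        by (rule obtain_subset_with_card_n)
      have newU: "\<forall>w\<in>E' \<union> Od'. w \<in> U" using E' Od' UEO by blast
      have newprop: "set w \<subseteq> Ups \<and> length w = Suc k \<and> \<not>(\<exists>v\<in>S. prefix v w)" if "w \<in> E' \<union> Od'" for w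
        using newU that unfolding U_def Unc_def Wd_def by auto
      define S' where "S' = S \<union> E' \<union> Od'"
      have "finite S'" using S(1) E' Od' by (simp add: S'_def)
      moreover have "\<forall>v\<in>S'. set v \<subseteq> Ups \<and> length v \<ge> 1 \<and> length v \<le> Suc k"
        using S(2) newprop unfolding S'_def by fastforce
      moreover have "pfree S'"
        unfolding pfree_def
      proof (intro ballI impI)
        fix v w assume vw: "v \<in> S'" "w \<in> S'" "prefix v w"
        show "v = w"
        proof (cases "v \<in> S")
          case True
          then show ?thesis
            using vw S(3) newprop unfolding S'_def pfree_def by blast
        next
          case False
          then have v': "v \<in> E' \<union> Od'" using vw(1) S'_def by blast
          then have lv: "length v = Suc k" using newprop by blast
          have "length w \<le> Suc k" "length v \<le> length w"
            using vw(2) S(2) newprop prefix_length_le[OF vw(3)] unfolding S'_def by fastforce+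
          then have "length v = length w" using lv by simp
          then show ?thesis using vw(3)
            by (metis append_Nil2 length_0_conv prefix_def add_diff_cancel_left' length_append)
        qed
      qed
      moreover have "\<forall>i. 1 \<le> i \<longrightarrow> i \<le> Suc k \<longrightarrow> ce U1 S' i = \<eta> i \<and> co U1 S' i = \<omega> i"
      proof (intro allI impI)
        fix i assume i: "1 \<le> i" "i \<le> Suc k"
        show "ce U1 S' i = \<eta> i \<and> co U1 S' i = \<omega> i"
        proof (cases "i \<le> k")
          case True
          have "{v\<in>S'. length v = i \<and> even_word U1 v} = {v\<in>S. length v = i \<and> even_word U1 v}"
               "{v\<in>S'. length v = i \<and> \<not> even_word U1 v} = {v\<in>S. length v = i \<and> \<not> even_word U1 v}"
            using newprop True unfolding S'_def by fastforce+
          then show ?thesis using S(4) i True unfolding ce_def co_def by simp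
        next
          case False
          then have ik: "i = Suc k" using i by simp
          have "{v\<in>S'. length v = i \<and> even_word U1 v} = E'"
               "{v\<in>S'. length v = i \<and> \<not> even_word U1 v} = Od'"
            using newprop ik S(2) E' Od' unfolding S'_def E_def Od_def by fastforce+
          then show ?thesis using E' Od' ik unfolding ce_def co_def by simp
        qed
      qed
      ultimately show ?case by blast
    qed
    obtain S where S: "finite S" "\<forall>v\<in>S. set v \<subseteq> Ups \<and> length v \<ge> 1 \<and> length v \<le> r" "pfree S"
        "\<forall>i. 1 \<le> i \<longrightarrow> i \<le> r \<longrightarrow> ce U1 S i = \<eta> i \<and> co U1 S i = \<omega> i"
      using claim[of r] by blast
    have Sprop: "\<forall>v\<in>S. set v \<subseteq> Ups \<and> length v \<ge> 1" using S(2) by auto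
    obtain L where L: "set L = S" "distinct L" using finite_distinct_list[OF S(1)] by blast
    have "int (card (Unc Ups S r)) = Kplus \<eta> \<omega> (card U0) (card U1) r"
      unfolding Kp K_ident(1)[OF A S(1) Sprop S(3)] by (rule Kfun_cong) (simp add: S(4))
    then have "card (Unc Ups S r) = 0" using H by (simp add: r_def)
    moreover have "finite (Unc Ups S r)" unfolding Unc_def using finite_Wd[OF A(1)] by simp
    ultimately have Unc0: "Unc Ups S r = {}" by simp
    have cov: "\<exists>v\<in>S. prefix v w" if "set w \<subseteq> Ups" "length w = r" for w
      using Unc0 that unfolding Unc_def Wd_def by blast
    have "U0 \<noteq> {}" using assms(4) by (metis card.empty less_irrefl)
    then obtain a where "a \<in> U0" by blast
    then have a: "a \<in> Ups" using assms(2) by blast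
    have "exhaustive_list Ups L" unfolding exhaustive_list_def L(1)
    proof (intro allI impI)
      fix w assume w: "set w \<subseteq> Ups"
      show "(\<exists>v\<in>S. prefix v w) \<or> (\<exists>v\<in>S. prefix w v)"
      proof (cases "r \<le> length w")
        case True
        have "set (take r w) \<subseteq> Ups" using w by (meson order_trans set_take_subset)
        moreover have "length (take r w) = r" using True by simp
        ultimately obtain v where v: "v \<in> S" "prefix v (take r w)" using cov by blast
        have "prefix v w" using prefix_order.trans[OF v(2) take_is_prefix] .
        then show ?thesis using v(1) by blast
      next
        case False
        let ?w = "w @ replicate (r - length w) a"
        have "set ?w \<subseteq> Ups" using w a by auto
        moreover have "length ?w = r" using False by simp
        ultimately obtain v where "v \<in> S" "prefix v ?w" using cov by blast
        moreover have "prefix w ?w" by (simp add: prefix_def)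
        ultimately show ?thesis using prefix_same_cases[of v ?w w] by blast
      qed
    qed
    moreover have "prefix_free_list L"
      unfolding pfl_iff using L S(3) Sprop by auto
    moreover have "\<forall>w\<in>set L. set w \<subseteq> Ups" using L Sprop by auto
    moreover have "has_length_distribution U1 L \<eta> \<omega>"
      unfolding has_length_distribution_def
    proof (intro allI impI)
      fix l :: nat assume l: "1 \<le> l"
      have e: "length (filter (\<lambda>w. length w = l \<and> even_word U1 w) L) = ce U1 S l"
        and o: "length (filter (\<lambda>w. length w = l \<and> odd_word U1 w) L) = co U1 S l"
        using L by (simp_all add: card_filter_distinct ce_def co_def odd_word_iff)
      show "\<eta> l = length (filter (\<lambda>w. length w = l \<and> even_word U1 w) L) \<and>
            \<omega> l = length (filter (\<lambda>w. length w = l \<and> odd_word U1 w) L)"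
      proof (cases "l \<le> r")
        case True
        then show ?thesis using e o S(4) l by simp
      next
        case False
        have emp: "{v\<in>S. length v = l \<and> P v} = {}" for P
          using S(2) False by fastforce
        have "ce U1 S l = 0" "co U1 S l = 0" unfolding ce_def co_def emp by simp_all
        then show ?thesis using e o zero_r[OF l] False by simp
      qed
    qed
    ultimately show "\<exists>L. (\<forall>w\<in>set L. set w \<subseteq> Ups) \<and> prefix_free_list L \<and> exhaustive_list Ups L
              \<and> has_length_distribution U1 L \<eta> \<omega>" by blast
  qed
qed

end
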